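(* Let $\mu\in\mathcal P_\varnothing(nl)$ have Frobenius form $(a_1,\dots,a_k\mid b_1,\dots,b_k)$. Then \[\mathrm{Eig}(\mu)=\sum_{i=1}^k\left(t^{e'_{b_i}}\sum_{j=1}^{\lceil b_i/l\rceil}t^{-(j-1)h}+t^{e''_{a_i}}\sum_{j=1}^{\lfloor(a_i+1)/l\rfloor}t^{(j-1)h}\right),\] where the subscripts of $e',e''$ are read modulo $l$.
   Context: Let $\mathbf h=(h,H_1,\dots,H_{l-1})\in\mathbb{Q}^l$ be a (generic) parameter and $H_0=-(H_1+\dots+H_{l-1})$. Let $\theta=(\theta_0,\dots,\theta_{l-1})=(-h+H_0,H_1,\dots,H_{l-1})$, with indices mod $l$; note $\sum_i\theta_i=-h$. Define $e'_0=-h$ and $e'_i=H_1+\dots+H_i$ for $1\le i\le l-1$. Define $e''_{l-1}=0$ and $e''_i=h+\sum_{j=1}^{l-i-1}H_j$ for $0\le i\le l-2$. $\mathcal P_\varnothing(nl)$ is the set of partitions of $nl$ with empty $l$-core. The Frobenius form has $a_i=\mu_i-i$ and $b_i=\mu^t_i-i$ for the diagonal cells $(i,i)$. For $m\ge1$ and $1\le r\le m$, let $A(m,r)$ be the $m\times m$ matrix with only nonzero entries $A(m,r)_{j+1,j}=\sum_{s=1}^j\theta_{r-s}$ for $1\le j<r$ and $A(m,r)_{j+1,j}=-\sum_{s=0}^{m-j-1}\theta_{-m+r+s}$ for $r\le j\le m-1$. Let $\Lambda(m)$ be the matrix with ones at $(j,j+1)$. Then $\Lambda(m)A(m,r)=\mathrm{diag}(\alpha_1,\dots,\alpha_m)$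 with $\alpha_j=A(m,r)_{j+1,j}$ for $j<m$ and $\alpha_m=0$. For $\mu$ with $r_i=b_i+1$ and $m_i=a_i+b_i+1$, let $\alpha^{(i)}_j$ be these diagonal entries for $(m,r)=(m_i,r_i)$. Define the formal sum $\mathrm{Eig}(\mu,i)=\sum_{1\le j\le m_i,\ j\equiv r_i-1\ (\mathrm{mod}\ l)}t^{\alpha^{(i)}_j}$ and $\mathrm{Eig}(\mu)=\sum_{i=1}^k\mathrm{Eig}(\mu,i)$, a sum of monomials with rational exponents. *)

theory Defs
  imports Complex_Main "HOL-Library.Multiset"
begin

text \<open>A partition is a weakly decreasing list of positive naturals. Rows and columns
  are indexed from 0 internally; the cell (i,j) (0-indexed) lies in the diagram iff
  i < length mu and j < mu ! i.\<close>

definition is_partition :: "nat list \<Rightarrow> bool" where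
  "is_partition mu \<longleftrightarrow> sorted_wrt (\<ge>) mu \<and> 0 \<notin> set mu"

definition cells :: "nat list \<Rightarrow> (nat \<times> nat) set" where
  "cells mu = {(i, j). i < length mu \<and> j < mu ! i}"

definition adjacent_cells :: "nat \<times> nat \<Rightarrow> nat \<times> nat \<Rightarrow> bool" where
  "adjacent_cells c d \<longleftrightarrow>
     (fst c = fst d \<and> (snd d = Suc (snd c) \<or> snd c = Suc (snd d))) \<or>
     (snd c = snd d \<and> (fst d = Suc (fst c) \<or> fst c = Suc (fst d)))"

definition connected_cells :: "(nat \<times> nat) set \<Rightarrow> bool" where
  "connected_cells D \<longleftrightarrow>
     (\<forall>c\<in>D. \<forall>d\<in>D. (\<lambda>x y. x \<in> D \<and> y \<in> D \<and> adjacent_cells x y)\<^sup>*\<^sup>* c d)"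

definition no_2x2_square :: "(nat \<times> nat) set \<Rightarrow> bool" where
  "no_2x2_square D \<longleftrightarrow>
     \<not> (\<exists>i j. (i, j) \<in> D \<and> (Suc i, j) \<in> D \<and> (i, Suc j) \<in> D \<and> (Suc i, Suc j) \<in> D)"

definition adds_rim_hook :: "nat \<Rightarrow> nat list \<Rightarrow> nat list \<Rightarrow> bool" where
  "adds_rim_hook l lam mu \<longleftrightarrow>
     is_partition lam \<and> is_partition mu \<and> cells lam \<subseteq> cells mu \<and>
     card (cells mu - cells lam) = l \<and> cells mu - cells lam \<noteq> {} \<and>
     connected_cells (cells mu - cells lam) \<and> no_2x2_square (cells mu - cells lam)"

text \<open>mu has empty l-core iff the empty partition is reached by successively
  removing l-rim hooks.\<close>

inductive empty_core :: "nat \<Rightarrow> nat list \<Rightarrow> bool" for l :: nat where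
  empty: "empty_core l []"
| add: "empty_core l lam \<Longrightarrow> adds_rim_hook l lam mu \<Longrightarrow> empty_core l mu"

definition P_empty :: "nat \<Rightarrow> nat \<Rightarrow> nat list set" where
  "P_empty l N = {mu. is_partition mu \<and> sum_list mu = N \<and> empty_core l mu}"

text \<open>Column length (conjugate partition), 0-indexed column j.\<close>

definition conj_part :: "nat list \<Rightarrow> nat \<Rightarrow> nat" where
  "conj_part mu j = card {i. i < length mu \<and> j < mu ! i}"

definition frob_k :: "nat list \<Rightarrow> nat" where
  "frob_k mu = card {i. i < length mu \<and> i < mu ! i}"

text \<open>Frobenius coordinates a_i = mu_i - i, b_i = mu^t_i - i for 1 \<le> i \<le> k
  (1-indexed rows/columns as in the paper).\<close>

definition frob_a :: "nat list \<Rightarrow> nat \<Rightarrow> nat" where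
  "frob_a mu i = mu ! (i - 1) - i"

definition frob_b :: "nat list \<Rightarrow> nat \<Rightarrow> nat" where
  "frob_b mu i = conj_part mu (i - 1) - i"

text \<open>The parameter is h and H_1,...,H_{l-1} (values H i for 1 \<le> i \<le> l-1 are used).\<close>

definition H0 :: "nat \<Rightarrow> (nat \<Rightarrow> rat) \<Rightarrow> rat" where
  "H0 l H = - (\<Sum>i=1..l-1. H i)"

definition theta :: "nat \<Rightarrow> rat \<Rightarrow> (nat \<Rightarrow> rat) \<Rightarrow> int \<Rightarrow> rat" where
  "theta l h H i = (let i' = nat (i mod int l) in if i' = 0 then - h + H0 l H else H i')"

definition e' :: "nat \<Rightarrow> rat \<Rightarrow> (nat \<Rightarrow> rat) \<Rightarrow> nat \<Rightarrow> rat" where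
  "e' l h H i = (if i = 0 then - h else (\<Sum>j=1..i. H j))"

definition e'' :: "nat \<Rightarrow> rat \<Rightarrow> (nat \<Rightarrow> rat) \<Rightarrow> nat \<Rightarrow> rat" where
  "e'' l h H i = (if i = l - 1 then 0 else h + (\<Sum>j=1..l-i-1. H j))"

text \<open>Subdiagonal entries A(m,r)_{j+1,j}, 1 \<le> j \<le> m-1 (zero elsewhere).\<close>

definition A_sub :: "nat \<Rightarrow> rat \<Rightarrow> (nat \<Rightarrow> rat) \<Rightarrow> nat \<Rightarrow> nat \<Rightarrow> nat \<Rightarrow> rat" where
  "A_sub l h H m r j =
     (if 1 \<le> j \<and> j < r then (\<Sum>s=1..j. theta l h H (int r - int s))
      else if r \<le> j \<and> j \<le> m - 1 then
        - (\<Sum>s=0..m-j-1. theta l h H (- int m + int r + int s))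
      else 0)"

text \<open>Diagonal entries alpha_j of Lambda(m) A(m,r): alpha_j = A_{j+1,j} for j < m and
  alpha_m = 0.\<close>

definition alpha :: "nat \<Rightarrow> rat \<Rightarrow> (nat \<Rightarrow> rat) \<Rightarrow> nat \<Rightarrow> nat \<Rightarrow> nat \<Rightarrow> rat" where
  "alpha l h H m r j = (if j < m then A_sub l h H m r j else 0)"

text \<open>A formal sum of monomials t^x with rational exponents is represented by the
  multiset of its exponents.\<close>

definition Eig_i :: "nat \<Rightarrow> rat \<Rightarrow> (nat \<Rightarrow> rat) \<Rightarrow> nat list \<Rightarrow> nat \<Rightarrow> rat multiset" where
  "Eig_i l h H mu i =
     (let r = frob_b mu i + 1; m = frob_a mu i + frob_b mu i + 1 in
      image_mset (alpha l h H m r)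
        (mset_set {j \<in> {1..m}. int j mod int l = (int r - 1) mod int l}))"

definition Eig :: "nat \<Rightarrow> rat \<Rightarrow> (nat \<Rightarrow> rat) \<Rightarrow> nat list \<Rightarrow> rat multiset" where
  "Eig l h H mu = (\<Sum>i\<in>{1..frob_k mu}. Eig_i l h H mu i)"

end

theory Submission imports Defs begin


lemma ceil_nat: fixes b l :: nat assumes "l \<ge> 1"
  shows "nat \<lceil>(of_nat b :: rat) / of_nat l\<rceil> = (b + l - 1) div l"
proof -
  define q where "q = (int b + int l - 1) div int l"
  define r where "r = (int b + int l - 1) mod int l"
  have qr: "int b + int l - 1 = int l * q + r" unfolding q_def r_def by simp
  have r: "0 \<le> r" "r < int l" unfolding r_def using assms by simp_all
  have "- int b div int l = - q"
    by (rule int_div_pos_eq[of _ _ _ "int l - 1 - r"]) (use qr r in \<open>simp_all add: algebra_simps\<close>)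
  moreover have "\<lceil>(of_nat b :: rat) / of_nat l\<rceil> = - (- int b div int l)"
    using ceiling_divide_eq_div[of "int b" "int l", where 'a=rat] by simp
  moreover have "int ((b + l - 1) div l) = q" unfolding q_def using assms by (simp add: zdiv_int of_nat_diff)
  ultimately show ?thesis by simp
qed

context
  fixes l :: nat and h :: rat and H :: "nat \<Rightarrow> rat"
  assumes l1: "l \<ge> 1"
begin

definition S :: "nat \<Rightarrow> rat" where "S n = (\<Sum>s<n. theta l h H (int s + 1))"
definition U :: "nat \<Rightarrow> rat" where "U n = (\<Sum>s<n. theta l h H (- int s))"

lemma th_per: "x mod int l = y mod int l \<Longrightarrow> theta l h H x = theta l h H y"
  by (simp add: theta_def)

lemma th_small: "1 \<le> i \<Longrightarrow> i < l \<Longrightarrow> theta l h H (int i) = H i"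
  by (simp add: theta_def)

lemma th_zero: "theta l h H 0 = - h + H0 l H"
  by (simp add: theta_def)

lemma th_l: "theta l h H (int l) = - h + H0 l H"
  by (simp add: theta_def)

lemma S_small: "d < l \<Longrightarrow> S d = (\<Sum>j=1..d. H j)"
proof (induction d)
  case 0 then show ?case by (simp add: S_def)
next
  case (Suc d)
  have "S (Suc d) = S d + theta l h H (int d + 1)" by (simp add: S_def)
  also have "theta l h H (int d + 1) = H (Suc d)"
    using th_small[of "Suc d"] Suc.prems by (simp add: add.commute)
  finally show ?case using Suc by simp
qed

lemma S_l: "S l = - h"
proof -
  obtain k where k: "l = Suc k" using l1 by (cases l) auto
  have "S (Suc k) = S k + theta l h H (int k + 1)" by (simp add: S_def)
  moreover have "int k + 1 = int l" using k by simp
  moreover have "S k = (\<Sum>j=1..k. H j)" using S_small[of k] k by simp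
  moreover have "H0 l H = - (\<Sum>j=1..k. H j)" using k by (simp add: H0_def)
  ultimately show ?thesis using k th_l by simp
qed

lemma S_shift: "S (n + l) = S n - h"
proof (induction n)
  case 0 then show ?case using S_l by (simp add: S_def)
next
  case (Suc n)
  have "S (Suc n + l) = S (n + l) + theta l h H (int (n+l) + 1)" by (simp add: S_def)
  also have "theta l h H (int (n+l) + 1) = theta l h H (int n + 1)"
  proof (rule th_per)
    have "int (n+l) + 1 = (int n + 1) + 1 * int l" by simp
    then show "(int (n+l) + 1) mod int l = (int n + 1) mod int l" by (metis mod_mult_self1)
  qed
  finally show ?case using Suc by (simp add: S_def)
qed

lemma S_shiftk: "S (n + k * l) = S n - of_nat k * h"
proof (induction k)
  case 0 then show ?case by simp
next
  case (Suc k)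
  have "n + Suc k * l = (n + k * l) + l" by simp
  then have "S (n + Suc k * l) = S (n + k * l) - h" using S_shift[of "n + k * l"] by metis
  then show ?case using Suc by (simp add: algebra_simps)
qed

lemma U_S: "e \<le> l \<Longrightarrow> U e + S (l - e) = S l"
proof (induction e)
  case 0 then show ?case by (simp add: U_def)
next
  case (Suc e)
  have lq: "l - e = Suc (l - Suc e)" using Suc.prems by simp
  have "S (l - e) = S (l - Suc e) + theta l h H (int (l - Suc e) + 1)"
    unfolding lq S_def by simp
  moreover have "theta l h H (int (l - Suc e) + 1) = theta l h H (- int e)"
  proof (rule th_per)
    have "int (l - Suc e) + 1 = - int e + int l" using Suc.prems by simp
    then show "(int (l - Suc e) + 1) mod int l = - int e mod int l" by simp
  qed
  moreover have "U (Suc e) = U e + theta l h H (- int e)" by (simp add: U_def)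
  ultimately show ?case using Suc by simp
qed

lemma U_l: "U l = - h"
  using U_S[of l] S_l by (simp add: S_def)

lemma U_shift: "U (n + l) = U n - h"
proof (induction n)
  case 0 then show ?case using U_l by (simp add: U_def)
next
  case (Suc n)
  have "U (Suc n + l) = U (n + l) + theta l h H (- int (n+l))" by (simp add: U_def)
  also have "theta l h H (- int (n+l)) = theta l h H (- int n)"
  proof (rule th_per)
    have "- int (n+l) = - int n + (-1) * int l" by simp
    then show "- int (n + l) mod int l = - int n mod int l" by (metis mod_mult_self1)
  qed
  finally show ?case using Suc by (simp add: U_def)
qed

lemma U_shiftk: "U (n + k * l) = U n - of_nat k * h"
proof (induction k)
  case 0 then show ?case by simp
next
  case (Suc k)
  have "n + Suc k * l = (n + k * l) + l" by simp
  then have "U (n + Suc k * l) = U (n + k * l) - h" using U_shift[of "n + k * l"] by metis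
  then show ?case using Suc by (simp add: algebra_simps)
qed

lemma F1: assumes "n \<ge> 1" shows "S n = e' l h H (n mod l) - of_nat ((n - 1) div l) * h"
proof -
  define d where "d = (n - 1) mod l + 1"
  define k where "k = (n - 1) div l"
  have n: "n = d + k * l" using assms unfolding d_def k_def by simp
  have dl: "d \<le> l" "d \<ge> 1" unfolding d_def using l1
    by (simp_all add: Suc_leI)
  have Sn: "S n = S d - of_nat k * h" using n S_shiftk by simp
  show ?thesis
  proof (cases "d < l")
    case True
    have "n mod l = d" using n True by simp
    then show ?thesis using Sn S_small[OF True] dl by (simp add: e'_def k_def)
  next
    case False
    then have "d = l" using dl by simp
    then have "n mod l = 0" using n by simp
    then show ?thesis using Sn \<open>d = l\<close> S_l by (simp add: e'_def k_def)
  qed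
qed

lemma F2: "- U n = e'' l h H ((n + l - 1) mod l) + of_nat (n div l) * h"
proof -
  define e where "e = n mod l"
  define k where "k = n div l"
  have n: "n = e + k * l" unfolding e_def k_def by simp
  have el: "e < l" unfolding e_def using l1 by simp
  have Un: "U n = U e - of_nat k * h" using n U_shiftk by simp
  show ?thesis
  proof (cases "e = 0")
    case True
    have "(n + l - 1) mod l = l - 1"
    proof -
      have "n + l - 1 = (l - 1) + (k + 0) * l" using n True l1 by (simp add: algebra_simps)
      then show ?thesis using l1 by (metis mod_mult_self1 mod_less diff_less zero_less_one less_le_trans add_0_right)
    qed
    then show ?thesis using Un True by (simp add: e''_def k_def U_def)
  next
    case False
    have m: "(n + l - 1) mod l = e - 1"
    proof -
      have "n + l - 1 = (e - 1) + (k + 1) * l" using n False by (simp add: algebra_simps)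
      then show ?thesis using el by (metis mod_mult_self1 mod_less less_imp_diff_less)
    qed
    have "U e = S l - S (l - e)" using U_S[of e] el by simp
    also have "S (l - e) = (\<Sum>j=1..l-e. H j)" using S_small[of "l-e"] False el by simp
    finally have "U e = - h - (\<Sum>j=1..l-e. H j)" using S_l by simp
    moreover have "e - 1 \<noteq> l - 1" "l - (e - 1) - 1 = l - e" using False el by auto
    ultimately show ?thesis using Un m by (simp add: e''_def k_def)
  qed
qed

lemma alpha1:
  assumes "1 \<le> j" "j \<le> b" "j mod l = b mod l"
  shows "alpha l h H (a + b + 1) (b + 1) j = S j"
proof -
  have "alpha l h H (a + b + 1) (b + 1) j = (\<Sum>s=1..j. theta l h H (int (b+1) - int s))"
    using assms by (simp add: alpha_def A_sub_def)
  also have "\<dots> = (\<Sum>i<j. theta l h H (int (b+1) - int (j - i)))"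
    by (rule sum.reindex_bij_witness[of _ "\<lambda>i. j - i" "\<lambda>s. j - s"]) auto
  also have "\<dots> = (\<Sum>i<j. theta l h H (int i + 1))"
  proof (rule sum.cong[OF refl])
    fix i assume "i \<in> {..<j}"
    then have i: "i < j" by simp
    obtain c where c: "b - j = l * c" using assms mod_eq_dvd_iff_nat[of j b l] by (auto elim: dvdE)
    have "b = j + l * c" using c assms by simp
    then have "int b = int j + int l * int c" by simp
    moreover have "int (j - i) = int j - int i" using i by simp
    ultimately have "int (b+1) - int (j - i) = (int i + 1) + int c * int l"
      by (simp add: algebra_simps)
    then show "theta l h H (int (b+1) - int (j - i)) = theta l h H (int i + 1)"
      by (intro th_per) (metis mod_mult_self1)
  qed
  finally show ?thesis by (simp add: S_def)
qed

lemma alpha2: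
  assumes "1 \<le> k" "k * l \<le> a + 1"
  shows "alpha l h H (a + b + 1) (b + 1) (b + k * l) = - U (a + 1 - k * l)"
proof (cases "k * l = a + 1")
  case True
  then show ?thesis by (simp add: alpha_def U_def)
next
  case False
  define p where "p = a - k * l"
  have kl: "k * l \<ge> 1" using assms l1 mult_le_mono[of 1 k 1 l] by simp
  have "alpha l h H (a + b + 1) (b + 1) (b + k * l) =
        - (\<Sum>s=0..p. theta l h H (- int (a + b + 1) + int (b + 1) + int s))"
    using assms False kl by (simp add: alpha_def A_sub_def p_def)
  also have "(\<Sum>s=0..p. theta l h H (- int (a + b + 1) + int (b + 1) + int s))
       = (\<Sum>t<Suc p. theta l h H (- int t))"
  proof -
    have key: "theta l h H (- int (a + b + 1) + int (b + 1) + int s) = theta l h H (- int (p - s))"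
      if s: "s \<le> p" for s
    proof (rule th_per)
      have "- int (a + b + 1) + int (b + 1) + int s = - int (p - s) + (- int k) * int l"
        using s assms False by (simp add: p_def of_nat_diff)
      then show "(- int (a + b + 1) + int (b + 1) + int s) mod int l = - int (p - s) mod int l"
        by (metis mod_mult_self1)
    qed
    have "(\<Sum>s=0..p. theta l h H (- int (a + b + 1) + int (b + 1) + int s))
        = (\<Sum>s=0..p. theta l h H (- int (p - s)))" using key by (intro sum.cong) auto
    also have "\<dots> = (\<Sum>t<Suc p. theta l h H (- int t))"
      by (rule sum.reindex_bij_witness[of _ "\<lambda>t. p - t" "\<lambda>s. p - s"]) auto
    finally show ?thesis .
  qed
  finally show ?thesis using assms False by (simp add: U_def p_def Suc_diff_le)
qed

lemma part1:
  fixes a b :: nat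
  defines "Q \<equiv> (b + l - 1) div l"
  shows "image_mset (alpha l h H (a+b+1) (b+1)) (mset_set {j\<in>{1..b}. j mod l = b mod l})
    = image_mset (\<lambda>j. e' l h H (b mod l) - (of_nat j - 1) * h) (mset_set {1..Q})"
proof -
  define g where "g j' = b - (Q - j') * l" for j'
  have lp: "l > 0" using l1 by simp
  have Qlt: "t < Q \<longleftrightarrow> t * l < b" for t
  proof -
    have "t < Q \<longleftrightarrow> Suc t * l \<le> b + l - 1"
      unfolding Q_def using less_eq_div_iff_mult_less_eq[OF lp, of "Suc t" "b + l - 1"]
      by (simp only: Suc_le_eq[symmetric])
    also have "\<dots> \<longleftrightarrow> t * l < b" using l1 by auto
    finally show ?thesis .
  qed
  have set: "{j\<in>{1..b}. j mod l = b mod l} = g ` {1..Q}"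
  proof
    show "{j\<in>{1..b}. j mod l = b mod l} \<subseteq> g ` {1..Q}"
    proof
      fix j assume "j \<in> {j\<in>{1..b}. j mod l = b mod l}"
      then have j: "1 \<le> j" "j \<le> b" "j mod l = b mod l" by auto
      then have "l dvd b - j" using mod_eq_dvd_iff_nat[of j b l] by simp
      then obtain t where t: "b - j = t * l" by (metis dvdE mult.commute)
      have tl: "t * l < b" using t j by simp
      then have tQ: "t < Q" using Qlt by simp
      have "g (Q - t) = j" unfolding g_def using tQ t j by simp
      moreover have "Q - t \<in> {1..Q}" using tQ by simp
      ultimately show "j \<in> g ` {1..Q}" by (metis image_eqI)
    qed
  next
    show "g ` {1..Q} \<subseteq> {j\<in>{1..b}. j mod l = b mod l}"
    proof
      fix x assume "x \<in> g ` {1..Q}"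
      then obtain j' where j': "j' \<in> {1..Q}" "x = g j'" by auto
      define t where "t = Q - j'"
      have tl: "t * l < b" using Qlt[of t] j' unfolding t_def by auto
      have x: "x = b - t * l" using j' unfolding g_def t_def by simp
      have "b = x + t * l" using x tl by simp
      then have "b mod l = x mod l" by simp
      then show "x \<in> {j\<in>{1..b}. j mod l = b mod l}" using x tl by auto
    qed
  qed
  have inj: "inj_on g {1..Q}"
  proof
    fix x y assume x: "x \<in> {1..Q}" and y: "y \<in> {1..Q}" and e: "g x = g y"
    have "(Q - x) * l < b" "(Q - y) * l < b" using Qlt[of "Q - x"] Qlt[of "Q - y"] x y by auto
    moreover have "b - (Q - x) * l = b - (Q - y) * l" using e unfolding g_def by simp
    ultimately have "(Q - x) * l = (Q - y) * l" by linarith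
    then have "Q - x = Q - y" using lp by simp
    then show "x = y" using x y by auto
  qed
  have vals: "alpha l h H (a+b+1) (b+1) (g j') = e' l h H (b mod l) - (of_nat j' - 1) * h"
    if j': "j' \<in> {1..Q}" for j'
  proof -
    define t where "t = Q - j'"
    have tl: "t * l < b" using Qlt[of t] j' unfolding t_def by auto
    have x: "g j' = b - t * l" using j' unfolding g_def t_def by simp
    have bx: "b = g j' + t * l" using x tl by simp
    then have m: "g j' mod l = b mod l" by (metis mod_mult_self1)
    have g1: "1 \<le> g j'" using x tl by simp
    have "alpha l h H (a+b+1) (b+1) (g j') = S (g j')"
      using alpha1[of "g j'" b a, OF g1 _ m] x by simp
    also have "\<dots> = e' l h H (b mod l) - of_nat ((g j' - 1) div l) * h"
      using F1[OF g1] m by simp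
    also have "(g j' - 1) div l = j' - 1"
    proof -
      have "b - 1 = (g j' - 1) + t * l" using bx g1 by simp
      then have "(b - 1) div l = (g j' - 1) div l + t" using lp by simp
      moreover have "Q = (b - 1) div l + 1"
      proof -
        have "b + l - 1 = (b - 1) + 1 * l" using tl by simp
        then show ?thesis unfolding Q_def using lp by (metis div_mult_self1 add.commute less_not_refl2)
      qed
      ultimately show ?thesis unfolding t_def using j' by auto
    qed
    finally show ?thesis using j' by (simp add: of_nat_diff)
  qed
  have "image_mset (alpha l h H (a+b+1) (b+1)) (mset_set {j\<in>{1..b}. j mod l = b mod l})
      = image_mset (alpha l h H (a+b+1) (b+1)) (image_mset g (mset_set {1..Q}))"
    unfolding set image_mset_mset_set[OF inj] ..
  also have "\<dots> = image_mset (\<lambda>j'. alpha l h H (a+b+1) (b+1) (g j')) (mset_set {1..Q})"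
    by (simp add: multiset.map_comp o_def)
  also have "\<dots> = image_mset (\<lambda>j. e' l h H (b mod l) - (of_nat j - 1) * h) (mset_set {1..Q})"
    by (rule image_mset_cong) (use vals in simp)
  finally show ?thesis .
qed

lemma part2:
  fixes a b :: nat
  defines "Q \<equiv> (a + 1) div l"
  shows "image_mset (alpha l h H (a+b+1) (b+1)) (mset_set {j\<in>{b+1..a+b+1}. j mod l = b mod l})
    = image_mset (\<lambda>j. e'' l h H (a mod l) + (of_nat j - 1) * h) (mset_set {1..Q})"
proof -
  define g where "g j' = b + (Q + 1 - j') * l" for j'
  have lp: "l > 0" using l1 by simp
  have Qle: "k \<le> Q \<longleftrightarrow> k * l \<le> a + 1" for k
    unfolding Q_def using less_eq_div_iff_mult_less_eq[OF lp] by simp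
  have set: "{j\<in>{b+1..a+b+1}. j mod l = b mod l} = g ` {1..Q}"
  proof
    show "{j\<in>{b+1..a+b+1}. j mod l = b mod l} \<subseteq> g ` {1..Q}"
    proof
      fix j assume "j \<in> {j\<in>{b+1..a+b+1}. j mod l = b mod l}"
      then have j: "b + 1 \<le> j" "j \<le> a + b + 1" "j mod l = b mod l" by auto
      then have "l dvd j - b" using mod_eq_dvd_iff_nat[of b j l] by simp
      then obtain k where k: "j - b = k * l" by (metis dvdE mult.commute)
      have k1: "k \<ge> 1" using k j by (cases k) auto
      have kQ: "k \<le> Q" using Qle[of k] k j by simp
      have "g (Q + 1 - k) = j" unfolding g_def using kQ k1 k j by simp
      moreover have "Q + 1 - k \<in> {1..Q}" using kQ k1 by auto
      ultimately show "j \<in> g ` {1..Q}" by (metis image_eqI)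
    qed
  next
    show "g ` {1..Q} \<subseteq> {j\<in>{b+1..a+b+1}. j mod l = b mod l}"
    proof
      fix x assume "x \<in> g ` {1..Q}"
      then obtain j' where j': "j' \<in> {1..Q}" "x = g j'" by auto
      define k where "k = Q + 1 - j'"
      have k1: "k \<ge> 1" "k \<le> Q" using j' unfolding k_def by auto
      have kl: "k * l \<le> a + 1" using Qle k1 by simp
      have kl1: "k * l \<ge> 1" using k1 l1 mult_le_mono[of 1 k 1 l] by simp
      have x: "x = b + k * l" using j' unfolding g_def k_def by simp
      then have "x mod l = b mod l" by simp
      then show "x \<in> {j\<in>{b+1..a+b+1}. j mod l = b mod l}" using x kl kl1 by auto
    qed
  qed
  have inj: "inj_on g {1..Q}"
  proof
    fix x y assume x: "x \<in> {1..Q}" and y: "y \<in> {1..Q}" and e: "g x = g y"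
    then have "(Q + 1 - x) * l = (Q + 1 - y) * l" unfolding g_def by simp
    then have "Q + 1 - x = Q + 1 - y" using lp by simp
    then show "x = y" using x y by auto
  qed
  have vals: "alpha l h H (a+b+1) (b+1) (g j') = e'' l h H (a mod l) + (of_nat j' - 1) * h"
    if j': "j' \<in> {1..Q}" for j'
  proof -
    define k where "k = Q + 1 - j'"
    have k1: "k \<ge> 1" "k \<le> Q" using j' unfolding k_def by auto
    have kl: "k * l \<le> a + 1" using Qle k1 by simp
    have x: "g j' = b + k * l" unfolding g_def k_def by simp
    have "alpha l h H (a+b+1) (b+1) (g j') = - U (a + 1 - k * l)"
      using alpha2[OF k1(1) kl, of b] x by simp
    also have "\<dots> = e'' l h H ((a + 1 - k * l + l - 1) mod l) + of_nat ((a + 1 - k * l) div l) * h"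
      by (rule F2)
    also have "(a + 1 - k * l + l - 1) mod l = a mod l"
    proof -
      have "(k - 1) * l + l = k * l" using k1 by (cases k) auto
      then have "a = (a + 1 - k * l + l - 1) + (k - 1) * l" using kl l1 by arith
      then show ?thesis by (metis mod_mult_self1)
    qed
    also have "(a + 1 - k * l) div l = j' - 1"
    proof -
      have "a + 1 = (a + 1 - k * l) + k * l" using kl by simp
      moreover have "(a + 1 - k * l + k * l) div l = k + (a + 1 - k * l) div l"
        by (rule div_mult_self1) (use lp in simp)
      ultimately have "Q = (a + 1 - k * l) div l + k" unfolding Q_def by simp
      then show ?thesis unfolding k_def using j' by auto
    qed
    finally show ?thesis using j' by (simp add: of_nat_diff)
  qed
  have "image_mset (alpha l h H (a+b+1) (b+1)) (mset_set {j\<in>{b+1..a+b+1}. j mod l = b mod l})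
      = image_mset (alpha l h H (a+b+1) (b+1)) (image_mset g (mset_set {1..Q}))"
    unfolding set image_mset_mset_set[OF inj] ..
  also have "\<dots> = image_mset (\<lambda>j'. alpha l h H (a+b+1) (b+1) (g j')) (mset_set {1..Q})"
    by (simp add: multiset.map_comp o_def)
  also have "\<dots> = image_mset (\<lambda>j. e'' l h H (a mod l) + (of_nat j - 1) * h) (mset_set {1..Q})"
    by (rule image_mset_cong) (use vals in simp)
  finally show ?thesis .
qed

lemma hook:
  fixes a b :: nat
  shows "image_mset (alpha l h H (a+b+1) (b+1))
      (mset_set {j \<in> {1..a+b+1}. int j mod int l = (int (b+1) - 1) mod int l})
    = image_mset (\<lambda>j. e' l h H (b mod l) - (of_nat j - 1) * h)
          (mset_set {1..nat \<lceil>(of_nat b :: rat) / of_nat l\<rceil>})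
      + image_mset (\<lambda>j. e'' l h H (a mod l) + (of_nat j - 1) * h)
          (mset_set {1..nat \<lfloor>(of_nat (a + 1) :: rat) / of_nat l\<rfloor>})"
proof -
  have "{j \<in> {1..a+b+1}. int j mod int l = (int (b+1) - 1) mod int l}
      = {j\<in>{1..b}. j mod l = b mod l} \<union> {j\<in>{b+1..a+b+1}. j mod l = b mod l}"
  proof -
    have "int j mod int l = (int (b+1) - 1) mod int l \<longleftrightarrow> j mod l = b mod l" for j
      by (metis add_diff_cancel_right' of_nat_1 of_nat_add of_nat_eq_iff zmod_int)
    then show ?thesis by auto
  qed
  moreover have "{j\<in>{1..b}. j mod l = b mod l} \<inter> {j\<in>{b+1..a+b+1}. j mod l = b mod l} = {}" by auto
  ultimately have "mset_set {j \<in> {1..a+b+1}. int j mod int l = (int (b+1) - 1) mod int l}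
      = mset_set {j\<in>{1..b}. j mod l = b mod l} + mset_set {j\<in>{b+1..a+b+1}. j mod l = b mod l}"
    by (simp add: mset_set_Union)
  moreover have "nat \<lceil>(of_nat b :: rat) / of_nat l\<rceil> = (b + l - 1) div l" using ceil_nat l1 by simp
  moreover have "nat \<lfloor>(of_nat (a + 1) :: rat) / of_nat l\<rfloor> = (a + 1) div l"
    by (metis floor_divide_of_nat_eq nat_int)
  ultimately show ?thesis using part1[of a b] part2[of a b] by simp
qed

end


theorem lemma6p16:
  fixes l n :: nat and h :: rat and H :: "nat \<Rightarrow> rat" and mu :: "nat list"
  assumes "l \<ge> 1"
    and "mu \<in> P_empty l (n * l)"
  shows "Eig l h H mu =
    (\<Sum>i\<in>{1..frob_k mu}.
        image_mset (\<lambda>j. e' l h H (frob_b mu i mod l) - (of_nat j - 1) * h)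
          (mset_set {1..nat \<lceil>(of_nat (frob_b mu i) :: rat) / of_nat l\<rceil>})
      + image_mset (\<lambda>j. e'' l h H (frob_a mu i mod l) + (of_nat j - 1) * h)
          (mset_set {1..nat \<lfloor>(of_nat (frob_a mu i + 1) :: rat) / of_nat l\<rfloor>}))"
  unfolding Eig_def Eig_i_def Let_def
  by (rule sum.cong[OF refl]) (rule hook[OF assms(1)])

end
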